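(* Let $\mathcal{I}=\{(i\mid A_i): i\in[m]\}$ be an index coding instance and let $|A|_{\min}=\min_{i\in[m]}|A_i|$. Then for every execution of the UMCD algorithm on $\mathcal{I}$ (with arbitrary tie-breaking), its output satisfies $$\beta_{\text{UMCD}}(\mathcal{I})\le \beta_{\text{MDS}}(\mathcal{I}) = m-|A|_{\min}.$$
   Context: An index coding instance consists of a positive integer $m$ and, for each receiver $i\in[m]=\{1,\dots,m\}$ (who wants message $x_i$), a side-information set $A_i\subseteq[m]\setminus\{i\}$. Write $B_i=[m]\setminus(A_i\cup\{i\})$ (interfering set). For a $0/1$ matrix $\boldsymbol{G}$ with rows indexed by $[r]$ and columns by $[m]$, $\boldsymbol{G}_{[k]}^{L}$ denotes the submatrix formed by the first $k$ rows and the columns indexed by $L\subseteq[m]$, and $\mathrm{mcm}(\boldsymbol{G})$ denotes the maximum number of entries equal to $1$ of $\boldsymbol{G}$ no two of which lie in the same row or the same column (the size of a maximum matching in the bipartite graph between rows and columns with an edge wherever the entry is $1$); a matrix with no columns has $\mathrm{mcm}=0$. UMCD algorithm: start with $N=[m]$, $k=0$. While $N\neq\emptyset$: set $k\leftarrow k+1$; choose $w\in N$ with $|A_w|=\min_{i\in N}|A_i|$ (ties broken arbitrarily); let the $k$-th row of $\boldsymbol{G}$ be the indicator vector of $\{w\}\cup A_w$ (entry $1$ in the columns of $\{w\}\cup A_w$, $0$ elsewhere); remove $w$ from $N$; then remove from $N$ every $i\in N$ with $\mathrm{mcm}(\boldsymbol{G}_{[k]}^{\{i\}\cup B_i})=\mathrm{mcm}(\boldsymbol{G}_{[k]}^{B_i})+1$.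 When $N=\emptyset$ the algorithm outputs $\beta_{\text{UMCD}}(\mathcal{I})=k$. *)

theory Defs
  imports Main
begin

text \<open>A 0/1 matrix with columns indexed by naturals is represented as a list of rows;
  each row is the set of columns where the entry equals 1.
  The k-th row of the paper is the (k-1)-th list element.\<close>

definition is_matching :: "nat set list \<Rightarrow> nat set \<Rightarrow> (nat \<times> nat) set \<Rightarrow> bool" where
  "is_matching G L M \<longleftrightarrow>
     M \<subseteq> {..<length G} \<times> L \<and> (\<forall>(r, c) \<in> M. c \<in> G ! r) \<and> inj_on fst M \<and> inj_on snd M"

text \<open>mcm of the submatrix of G consisting of all rows of G and the columns L
  (L is assumed finite; a matrix with no columns has mcm = 0).\<close>
definition mcm :: "nat set list \<Rightarrow> nat set \<Rightarrow> nat" where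
  "mcm G L = Max {card M | M. is_matching G L M}"

definition interf :: "nat \<Rightarrow> (nat \<Rightarrow> nat set) \<Rightarrow> nat \<Rightarrow> nat set" where
  "interf m A i = {1..m} - (A i \<union> {i})"

text \<open>Executions of the UMCD algorithm (arbitrary tie-breaking).
  umcd_exec m A N G k: starting from the current set N and current matrix G
  (whose rows are the first length G rows built so far), some run of the
  remaining while loop terminates with output k.\<close>
inductive umcd_exec :: "nat \<Rightarrow> (nat \<Rightarrow> nat set) \<Rightarrow> nat set \<Rightarrow> nat set list \<Rightarrow> nat \<Rightarrow> bool"
  for m :: nat and A :: "nat \<Rightarrow> nat set" where
  stop: "umcd_exec m A {} G (length G)"
| step: "\<lbrakk> N \<noteq> {}; w \<in> N; \<forall>i\<in>N. card (A w) \<le> card (A i);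
          G' = G @ [insert w (A w)];
          N' = {i \<in> N - {w}. mcm G' (insert i (interf m A i)) \<noteq> mcm G' (interf m A i) + 1};
          umcd_exec m A N' G' k \<rbrakk>
        \<Longrightarrow> umcd_exec m A N G k"

definition index_coding_instance :: "nat \<Rightarrow> (nat \<Rightarrow> nat set) \<Rightarrow> bool" where
  "index_coding_instance m A \<longleftrightarrow> m \<ge> 1 \<and> (\<forall>i\<in>{1..m}. A i \<subseteq> {1..m} - {i})"

definition umcd_output :: "nat \<Rightarrow> (nat \<Rightarrow> nat set) \<Rightarrow> nat \<Rightarrow> bool" where
  "umcd_output m A k \<longleftrightarrow> umcd_exec m A {1..m} [] k"

definition A_min :: "nat \<Rightarrow> (nat \<Rightarrow> nat set) \<Rightarrow> nat" where
  "A_min m A = Min ((\<lambda>i. card (A i)) ` {1..m})"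

end

theory Submission
  imports Defs
begin


lemma hall:
  fixes F :: "'a \<Rightarrow> 'b set"
  assumes "finite I" "\<forall>i\<in>I. finite (F i)"
    "\<forall>J\<subseteq>I. card J \<le> card (\<Union>(F ` J))"
  shows "\<exists>f. inj_on f I \<and> (\<forall>i\<in>I. f i \<in> F i)"
  using assms
proof (induction "card I" arbitrary: I F rule: less_induct)
  case less
  note fin = less.prems(1) and finF = less.prems(2) and H = less.prems(3)
  have finU: "finite (\<Union>(F ` J))" if "J \<subseteq> I" for J
    using that fin finF by (meson finite_UN_I finite_subset subsetD)
  show ?case
  proof (cases "I = {}")
    case True then show ?thesis by auto
  next
    case Ine: False
    show ?thesis
    proof (cases "\<exists>J. J \<subseteq> I \<and> J \<noteq> {} \<and> J \<noteq> I \<and> card (\<Union>(F ` J)) = card J")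
      case True
      then obtain J where J: "J \<subseteq> I" "J \<noteq> {}" "J \<noteq> I" "card (\<Union>(F ` J)) = card J" by blast
      have cJ: "card J < card I" using J fin by (meson psubsetI psubset_card_mono)
      have "\<exists>f. inj_on f J \<and> (\<forall>i\<in>J. f i \<in> F i)"
        apply (rule less.hyps[OF cJ])
        using J fin finF H by (auto intro: finite_subset)
      then obtain f1 where f1: "inj_on f1 J" "\<forall>i\<in>J. f1 i \<in> F i" by blast
      define F2 where "F2 i = F i - \<Union>(F ` J)" for i
      have cIJ: "card (I - J) < card I" using J fin
        by (metis Diff_subset Diff_empty Diff_eq_empty_iff card_seteq finite_Diff leI subset_antisym double_diff order_refl)
      have "\<exists>f. inj_on f (I - J) \<and> (\<forall>i\<in>I - J. f i \<in> F2 i)"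
      proof (rule less.hyps[OF cIJ])
        show "finite (I - J)" using fin by auto
        show "\<forall>i\<in>I - J. finite (F2 i)" using finF F2_def by auto
        show "\<forall>K\<subseteq>I - J. card K \<le> card (\<Union> (F2 ` K))"
        proof (intro allI impI)
          fix K assume K: "K \<subseteq> I - J"
          have e: "\<Union> (F2 ` K) = \<Union>(F ` (K \<union> J)) - \<Union>(F ` J)" unfolding F2_def by auto
          have s: "\<Union>(F ` J) \<subseteq> \<Union>(F ` (K \<union> J))" by auto
          have "card (\<Union> (F2 ` K)) = card (\<Union>(F ` (K \<union> J))) - card (\<Union>(F ` J))"
            unfolding e using s finU[of J] J(1) by (simp add: card_Diff_subset)
          moreover have "card (K \<union> J) \<le> card (\<Union>(F ` (K \<union> J)))"
          proof -
            have "K \<union> J \<subseteq> I" using K J by auto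
            then show ?thesis using H by blast
          qed
          moreover have "card (K \<union> J) = card K + card J"
            using K J fin by (subst card_Un_disjoint) (auto intro: finite_subset)
          ultimately show "card K \<le> card (\<Union> (F2 ` K))" using J(4) by linarith
        qed
      qed
      then obtain f2 where f2: "inj_on f2 (I - J)" "\<forall>i\<in>I - J. f2 i \<in> F2 i" by blast
      define f where "f i = (if i \<in> J then f1 i else f2 i)" for i
      have "inj_on f I"
        unfolding inj_on_def
      proof (intro ballI impI)
        fix x y assume xy: "x \<in> I" "y \<in> I" "f x = f y"
        show "x = y"
        proof (cases "x \<in> J"; cases "y \<in> J")
          assume "x \<in> J" "y \<in> J" then show ?thesis using xy f1 unfolding f_def by (auto simp: inj_on_def)
        next
          assume "x \<notin> J" "y \<notin> J" then show ?thesis using xy f2 unfolding f_def by (auto simp: inj_on_def)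
        next
          assume a: "x \<in> J" "y \<notin> J"
          then have "f1 x \<in> \<Union>(F ` J)" "f2 y \<notin> \<Union>(F ` J)" using f1 f2 xy F2_def by auto
          then show ?thesis using xy a unfolding f_def by auto
        next
          assume a: "x \<notin> J" "y \<in> J"
          then have "f1 y \<in> \<Union>(F ` J)" "f2 x \<notin> \<Union>(F ` J)" using f1 f2 xy F2_def by auto
          then show ?thesis using xy a unfolding f_def by auto
        qed
      qed
      moreover have "\<forall>i\<in>I. f i \<in> F i" using f1 f2 F2_def f_def by auto
      ultimately show ?thesis by blast
    next
      case False
      then have strict: "card J < card (\<Union>(F ` J))" if "J \<subseteq> I" "J \<noteq> {}" "J \<noteq> I" for J
        using H that by (metis le_neq_implies_less)
      obtain i where i: "i \<in> I" using Ine by blast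
      have "1 \<le> card (F i)"
      proof -
        have "{i} \<subseteq> I" using i by auto
        then have "card {i} \<le> card (\<Union>(F ` {i}))" using H by blast
        then show ?thesis by simp
      qed
      then obtain x where x: "x \<in> F i" by (metis card.empty ex_in_conv not_one_le_zero)
      define F' where "F' j = F j - {x}" for j
      have cI: "card (I - {i}) < card I" using i fin by (meson card_Diff1_less)
      have "\<exists>f. inj_on f (I - {i}) \<and> (\<forall>j\<in>I - {i}. f j \<in> F' j)"
      proof (rule less.hyps[OF cI])
        show "finite (I - {i})" using fin by auto
        show "\<forall>j\<in>I - {i}. finite (F' j)" using finF F'_def by auto
        show "\<forall>K\<subseteq>I - {i}. card K \<le> card (\<Union> (F' ` K))"
        proof (intro allI impI)
          fix K assume K: "K \<subseteq> I - {i}"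
          show "card K \<le> card (\<Union> (F' ` K))"
          proof (cases "K = {}")
            case True then show ?thesis by simp
          next
            case False
            have "K \<noteq> I" using K i by auto
            then have "card K < card (\<Union>(F ` K))" using strict K False by auto
            moreover have "\<Union> (F' ` K) = \<Union>(F ` K) - {x}" unfolding F'_def by auto
            moreover have "card (\<Union>(F ` K) - {x}) \<ge> card (\<Union>(F ` K)) - 1"
              using diff_card_le_card_Diff[of "{x}" "\<Union>(F ` K)"] by simp
            ultimately show ?thesis by simp
          qed
        qed
      qed
      then obtain f' where f': "inj_on f' (I - {i})" "\<forall>j\<in>I - {i}. f' j \<in> F' j" by blast
      define f where "f = f'(i := x)"
      have "inj_on f I"
      proof -
        have "inj_on f (I - {i})" using f' unfolding f_def inj_on_def by auto
        moreover have "f i \<notin> f ` (I - {i})" using f' F'_def f_def by auto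
        ultimately have "inj_on f (insert i (I - {i}))" by (simp only: inj_on_insert) simp
        moreover have "insert i (I - {i}) = I" using i by auto
        ultimately show ?thesis by simp
      qed
      moreover have "\<forall>j\<in>I. f j \<in> F j" using f' F'_def f_def x by auto
      ultimately show ?thesis by blast
    qed
  qed
qed



definition NB :: "nat set list \<Rightarrow> nat set \<Rightarrow> nat set" where
  "NB G U = (\<Union>r\<in>U. G ! r)"

lemma matching_finite_cards:
  assumes "finite L"
  shows "finite {card M | M. is_matching G L M}"
proof -
  have "{card M | M. is_matching G L M} \<subseteq> {..card ({..<length G} \<times> L)}"
  proof
    fix x assume "x \<in> {card M | M. is_matching G L M}"
    then obtain M where "x = card M" "M \<subseteq> {..<length G} \<times> L" unfolding is_matching_def by auto
    then show "x \<in> {..card ({..<length G} \<times> L)}" using assms card_mono[of "{..<length G} \<times> L" M] by simp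
  qed
  then show ?thesis using finite_subset by blast
qed

lemma mcm_ge:
  assumes "finite L" "is_matching G L M"
  shows "card M \<le> mcm G L"
  unfolding mcm_def using matching_finite_cards[OF assms(1)] assms(2)
  by (intro Max_ge) auto

lemma empty_matching: "is_matching G L {}"
  by (simp add: is_matching_def)

lemma mcm_obtain:
  assumes "finite L"
  shows "\<exists>M. is_matching G L M \<and> card M = mcm G L"
proof -
  have "mcm G L \<in> {card M | M. is_matching G L M}"
    unfolding mcm_def using matching_finite_cards[OF assms] empty_matching
    by (intro Max_in) auto
  then show ?thesis by auto
qed

lemma matching_finite: "finite L \<Longrightarrow> is_matching G L M \<Longrightarrow> finite M"
  unfolding is_matching_def by (meson finite_SigmaI finite_lessThan finite_subset)

lemma mcm_le_cover:
  assumes "finite L" "U \<subseteq> {..<length G}"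
  shows "mcm G L + card U \<le> length G + card (NB G U \<inter> L)"
proof -
  obtain M where M: "is_matching G L M" "card M = mcm G L" using mcm_obtain[OF assms(1)] by blast
  have fM: "finite M" using matching_finite[OF assms(1) M(1)] .
  define M1 where "M1 = {p\<in>M. fst p \<in> U}"
  define M2 where "M2 = {p\<in>M. fst p \<notin> U}"
  have "M = M1 \<union> M2" "M1 \<inter> M2 = {}" unfolding M1_def M2_def by auto
  moreover have "finite M1" "finite M2" using fM unfolding M1_def M2_def by auto
  ultimately have cM: "card M = card M1 + card M2" using card_Un_disjoint[of M1 M2] by simp
  have "card M1 \<le> card (NB G U \<inter> L)"
  proof -
    have "inj_on snd M1" using M(1) unfolding is_matching_def M1_def by (auto intro: inj_on_subset)
    moreover have "snd ` M1 \<subseteq> NB G U \<inter> L" using M(1) unfolding is_matching_def M1_def NB_def by fastforce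
    moreover have "finite (NB G U \<inter> L)" using assms(1) by simp
    ultimately show ?thesis by (rule card_inj_on_le)
  qed
  moreover have "card M2 \<le> card ({..<length G} - U)"
  proof -
    have "inj_on fst M2" using M(1) unfolding is_matching_def M2_def by (auto intro: inj_on_subset)
    moreover have "fst ` M2 \<subseteq> {..<length G} - U" using M(1) unfolding is_matching_def M2_def by fastforce
    ultimately show ?thesis by (rule card_inj_on_le) simp
  qed
  moreover have "card ({..<length G} - U) + card U = length G"
  proof -
    have fU: "finite U" using assms(2) finite_subset by blast
    have "card U \<le> length G" using card_mono[OF _ assms(2)] by simp
    moreover have "card ({..<length G} - U) = length G - card U"
      using card_Diff_subset[OF fU assms(2)] by simp
    ultimately show ?thesis by simp
  qed
  ultimately show ?thesis using M(2) cM by linarith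
qed

lemma mcm_insert_le:
  assumes "finite L"
  shows "mcm G (insert w L) \<le> mcm G L + 1"
proof -
  obtain M where M: "is_matching G (insert w L) M" "card M = mcm G (insert w L)"
    using mcm_obtain assms by (meson finite_insert)
  have fM: "finite M" using matching_finite M(1) assms by blast
  define M' where "M' = M - {p. snd p = w}"
  have "is_matching G L M'" using M(1) unfolding is_matching_def M'_def
    by (auto intro: inj_on_subset)
  then have "card M' \<le> mcm G L" using mcm_ge assms by blast
  moreover have "card (M \<inter> {p. snd p = w}) \<le> 1"
  proof -
    have "inj_on snd (M \<inter> {p. snd p = w})" using M(1) unfolding is_matching_def by (auto intro: inj_on_subset)
    moreover have "snd ` (M \<inter> {p. snd p = w}) \<subseteq> {w}" by auto
    ultimately have "card (M \<inter> {p. snd p = w}) \<le> card {w}" by (rule card_inj_on_le) simp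
    then show ?thesis by simp
  qed
  moreover have "card M = card M' + card (M \<inter> {p. snd p = w})"
  proof -
    have "M = M' \<union> (M \<inter> {p. snd p = w})" "M' \<inter> (M \<inter> {p. snd p = w}) = {}" unfolding M'_def by auto
    moreover have "finite M'" "finite (M \<inter> {p. snd p = w})" using fM unfolding M'_def by auto
    ultimately show ?thesis using card_Un_disjoint[of M' "M \<inter> {p. snd p = w}"] by simp
  qed
  ultimately show ?thesis using M(2) by linarith
qed

lemma mcm_nil: "mcm [] L = 0"
proof -
  have "{card M | M. is_matching [] L M} = {0}"
    unfolding is_matching_def by (auto intro!: exI[of _ "{}"])
  then show ?thesis unfolding mcm_def by simp
qed



lemma hall_defect:
  assumes fL: "finite L"
  shows "\<exists>U\<subseteq>{..<length G}. length G + card (NB G U \<inter> L) \<le> mcm G L + card U"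
proof -
  define k where "k = length G"
  define f where "f U = int (card U) - int (card (NB G U \<inter> L))" for U
  have fin: "finite (f ` Pow {..<k})" by simp
  obtain U0 where U0: "U0 \<subseteq> {..<k}" "f U0 = Max (f ` Pow {..<k})"
  proof -
    have "Max (f ` Pow {..<k}) \<in> f ` Pow {..<k}" using Max_in[OF fin] by blast
    then show ?thesis using that by (metis PowD imageE)
  qed
  have fmax: "f U \<le> f U0" if "U \<subseteq> {..<k}" for U
    using U0(2) fin that by (simp add: Max_ge)
  have "f {} = 0" unfolding f_def NB_def by simp
  then have d0: "f U0 \<ge> 0" using fmax[of "{}"] by simp
  define d where "d = nat (f U0)"
  have dI: "int d = f U0" using d0 unfolding d_def by simp
  define b where "b = Suc (Max (insert 0 L))"
  define D where "D = {b..<b+d}"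
  have DL: "D \<inter> L = {}"
  proof -
    have "x < b" if "x \<in> L" for x using that fL unfolding b_def
      by (simp add: le_imp_less_Suc)
    then show ?thesis unfolding D_def by force
  qed
  have cD: "card D = d" unfolding D_def by simp
  define F where "F r = (G ! r \<inter> L) \<union> D" for r
  have "\<exists>g. inj_on g {..<k} \<and> (\<forall>r\<in>{..<k}. g r \<in> F r)"
  proof (rule hall)
    show "finite {..<k}" by simp
    show "\<forall>i\<in>{..<k}. finite (F i)" unfolding F_def D_def using fL by auto
    show "\<forall>J\<subseteq>{..<k}. card J \<le> card (\<Union> (F ` J))"
    proof (intro allI impI)
      fix J assume J: "J \<subseteq> {..<k}"
      show "card J \<le> card (\<Union> (F ` J))"
      proof (cases "J = {}")
        case True then show ?thesis by simp
      next
        case False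
        then have e: "\<Union> (F ` J) = (NB G J \<inter> L) \<union> D" unfolding F_def NB_def by auto
        have "card ((NB G J \<inter> L) \<union> D) = card (NB G J \<inter> L) + card D"
          using DL fL by (subst card_Un_disjoint) (auto simp: D_def)
        moreover have "f J \<le> f U0" using fmax J by blast
        ultimately have "int (card J) \<le> int (card (\<Union> (F ` J)))" using e cD dI unfolding f_def by simp
        then show ?thesis by simp
      qed
    qed
  qed
  then obtain g where g: "inj_on g {..<k}" "\<forall>r\<in>{..<k}. g r \<in> F r" by blast
  define Rg where "Rg = {r\<in>{..<k}. g r \<in> L}"
  define M where "M = (\<lambda>r. (r, g r)) ` Rg"
  have "is_matching G L M"
    unfolding is_matching_def M_def
  proof (intro conjI)
    show "(\<lambda>r. (r, g r)) ` Rg \<subseteq> {..<length G} \<times> L" unfolding Rg_def k_def by auto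
    show "\<forall>(r, c)\<in>(\<lambda>r. (r, g r)) ` Rg. c \<in> G ! r"
      using g(2) DL unfolding Rg_def F_def by auto
    show "inj_on fst ((\<lambda>r. (r, g r)) ` Rg)" by (auto simp: inj_on_def)
    show "inj_on snd ((\<lambda>r. (r, g r)) ` Rg)" using g(1) unfolding inj_on_def Rg_def by auto
  qed
  then have cM: "card M \<le> mcm G L" using mcm_ge fL by blast
  have "card M = card Rg" unfolding M_def by (simp add: card_image inj_on_def)
  moreover have "card ({..<k} - Rg) \<le> d"
  proof -
    have "g ` ({..<k} - Rg) \<subseteq> D" using g(2) unfolding Rg_def F_def by auto
    moreover have "inj_on g ({..<k} - Rg)" using g(1) by (auto intro: inj_on_subset)
    moreover have "finite D" by (simp add: D_def)
    ultimately have "card ({..<k} - Rg) \<le> card D" using card_inj_on_le[of g "{..<k} - Rg" D] by blast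
    then show ?thesis using cD by simp
  qed
  moreover have "card ({..<k} - Rg) + card Rg = k"
  proof -
    have sub: "Rg \<subseteq> {..<k}" unfolding Rg_def by auto
    have fR: "finite Rg" using sub finite_subset by blast
    have "card Rg \<le> k" using card_mono[OF _ sub] by simp
    moreover have "card ({..<k} - Rg) = k - card Rg" using card_Diff_subset[OF fR sub] by simp
    ultimately show ?thesis by simp
  qed
  ultimately have "k \<le> mcm G L + d" using cM by linarith
  then have "k + card (NB G U0 \<inter> L) \<le> mcm G L + card U0"
    using dI unfolding f_def by linarith
  then show ?thesis using U0(1) k_def by blast
qed



definition expand :: "nat set list \<Rightarrow> nat \<Rightarrow> bool" where
  "expand G a \<longleftrightarrow> (\<forall>R\<subseteq>{..<length G}. R \<noteq> {} \<longrightarrow> card R + a \<le> card (NB G R))"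

definition rowsok :: "nat set list \<Rightarrow> nat \<Rightarrow> bool" where
  "rowsok G m \<longleftrightarrow> (\<forall>r<length G. G ! r \<subseteq> {1..m})"

lemma NB_sub: "rowsok G m \<Longrightarrow> R \<subseteq> {..<length G} \<Longrightarrow> NB G R \<subseteq> {1..m}"
  unfolding rowsok_def NB_def by (auto simp: subset_iff)

lemma NB_fin: "rowsok G m \<Longrightarrow> R \<subseteq> {..<length G} \<Longrightarrow> finite (NB G R)"
  by (rule finite_subset[OF NB_sub]) auto

lemma NB_mono: "U \<subseteq> V \<Longrightarrow> NB G U \<subseteq> NB G V"
  unfolding NB_def by auto

lemma decodable:
  assumes ok: "rowsok G m" and ex: "expand G a"
    and R: "R \<subseteq> {..<length G}" "R \<noteq> {}" "card (NB G R) = card R + a"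
    and S: "S \<subseteq> NB G R" "w \<in> S" "a + 1 \<le> card S"
    and B: "B = {1..m} - S"
  shows "mcm G (insert w B) = mcm G B + 1"
proof -
  define k where "k = length G"
  have fB: "finite B" using B by simp
  have wB: "w \<notin> B" using B S by auto
  have le: "mcm G (insert w B) \<le> mcm G B + 1" using mcm_insert_le fB by blast
  obtain U where U: "U \<subseteq> {..<k}" "k + card (NB G U \<inter> insert w B) \<le> mcm G (insert w B) + card U"
    using hall_defect[of "insert w B" G] fB k_def by auto
  have finU: "finite (NB G U)" using NB_fin ok U(1) k_def by blast
  have "mcm G B + 1 + card U \<le> k + card (NB G U \<inter> insert w B)"
  proof (cases "w \<in> NB G U")
    case True
    then have "NB G U \<inter> insert w B = insert w (NB G U \<inter> B)" by auto
    then have "card (NB G U \<inter> insert w B) = card (NB G U \<inter> B) + 1"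
      using wB finU by simp
    moreover have "mcm G B + card U \<le> k + card (NB G U \<inter> B)"
      using mcm_le_cover[OF fB] U(1) k_def by blast
    ultimately show ?thesis by linarith
  next
    case False
    then have e1: "NB G U \<inter> insert w B = NB G U \<inter> B" by auto
    have UR: "U \<union> R \<subseteq> {..<length G}" using U R k_def by auto
    have c1: "mcm G B + card (U \<union> R) \<le> k + card (NB G (U \<union> R) \<inter> B)"
      using mcm_le_cover[OF fB UR] k_def by blast
    have finR: "finite R" using R finite_subset by blast
    have finUU: "finite U" using U finite_subset by blast
    have cUR: "card (U \<union> R) = card U + card (R - U)"
    proof -
      have "U \<union> R = U \<union> (R - U)" by auto
      then show ?thesis using card_Un_disjoint[of U "R - U"] finR finUU by simp
    qed
    have cR: "card R = card (R \<inter> U) + card (R - U)"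
    proof -
      have "R = (R \<inter> U) \<union> (R - U)" by auto
      moreover have "(R \<inter> U) \<inter> (R - U) = {}" by auto
      ultimately show ?thesis using card_Un_disjoint[of "R \<inter> U" "R - U"] finR by simp
    qed
    define X where "X = S \<union> NB G (R \<inter> U)"
    have XR: "X \<subseteq> NB G R" using S unfolding X_def NB_def by auto
    have finNR: "finite (NB G R)" using NB_fin ok R(1) by blast
    have sub: "NB G (U \<union> R) \<inter> B \<subseteq> (NB G U \<inter> B) \<union> (NB G R - X)"
      using B unfolding X_def NB_def by auto
    have cX: "card (R \<inter> U) + a + 1 \<le> card X"
    proof (cases "R \<inter> U = {}")
      case True
      have "finite X" using XR finNR finite_subset by blast
      then have "card S \<le> card X" unfolding X_def by (intro card_mono) auto
      then show ?thesis using S(3) True by simp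
    next
      case False
      have "card (R \<inter> U) + a \<le> card (NB G (R \<inter> U))"
      proof -
        have "R \<inter> U \<subseteq> {..<length G}" using R(1) by auto
        then show ?thesis using ex False unfolding expand_def by blast
      qed
      moreover have "w \<notin> NB G (R \<inter> U)" using \<open>w \<notin> NB G U\<close> NB_mono[of "R \<inter> U" U G] by auto
      moreover have "insert w (NB G (R \<inter> U)) \<subseteq> X" using S(2) X_def by auto
      moreover have "finite X" using XR finNR finite_subset by blast
      moreover have "finite (NB G (R \<inter> U))" using NB_fin ok R(1) by (meson inf.coboundedI1)
      ultimately have "card (insert w (NB G (R \<inter> U))) \<le> card X"
        "card (insert w (NB G (R \<inter> U))) = card (NB G (R \<inter> U)) + 1"
        using card_mono[of X "insert w (NB G (R \<inter> U))"] by simp_all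
      then show ?thesis using \<open>card (R \<inter> U) + a \<le> card (NB G (R \<inter> U))\<close> by linarith
    qed
    have "card (NB G R - X) + card X = card (NB G R)"
    proof -
      have fX: "finite X" using XR finNR finite_subset by blast
      have "card X \<le> card (NB G R)" using card_mono[OF finNR XR] .
      moreover have "card (NB G R - X) = card (NB G R) - card X" using card_Diff_subset[OF fX XR] .
      ultimately show ?thesis by simp
    qed
    then have c2: "card (NB G R - X) + 1 \<le> card (R - U)" using cX cR R(3) by linarith
    have "card (NB G (U \<union> R) \<inter> B) \<le> card ((NB G U \<inter> B) \<union> (NB G R - X))"
      using sub finU finNR by (intro card_mono) auto
    also have "\<dots> \<le> card (NB G U \<inter> B) + card (NB G R - X)" by (rule card_Un_le)
    finally have "mcm G B + 1 + card U \<le> k + card (NB G U \<inter> B)" using c1 c2 cUR by linarith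
    then show ?thesis using e1 by simp
  qed
  then show ?thesis using le U(2) by linarith
qed



lemma NB_append:
  assumes "R' \<subseteq> {..<Suc (length G)}"
  shows "NB (G @ [S]) R' = NB G (R' - {length G}) \<union> (if length G \<in> R' then S else {})"
proof -
  have r: "(G @ [S]) ! r = (if r = length G then S else G ! r)" if "r \<in> R'" for r
    using that assms by (auto simp: nth_append less_Suc_eq)
  show ?thesis unfolding NB_def
  proof (rule set_eqI)
    fix x
    show "x \<in> (\<Union>r\<in>R'. (G @ [S]) ! r) \<longleftrightarrow> x \<in> (\<Union>r\<in>R' - {length G}. G ! r) \<union> (if length G \<in> R' then S else {})"
    proof
      assume "x \<in> (\<Union>r\<in>R'. (G @ [S]) ! r)"
      then obtain r where "r \<in> R'" "x \<in> (G @ [S]) ! r" by blast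
      then show "x \<in> (\<Union>r\<in>R' - {length G}. G ! r) \<union> (if length G \<in> R' then S else {})"
        using r[of r] by (cases "r = length G") auto
    next
      assume a: "x \<in> (\<Union>r\<in>R' - {length G}. G ! r) \<union> (if length G \<in> R' then S else {})"
      show "x \<in> (\<Union>r\<in>R'. (G @ [S]) ! r)"
      proof (cases "x \<in> (\<Union>r\<in>R' - {length G}. G ! r)")
        case True
        then obtain r where "r \<in> R'" "r \<noteq> length G" "x \<in> G ! r" by blast
        then show ?thesis using r[of r] by auto
      next
        case False
        then have "length G \<in> R'" "x \<in> S" using a by (auto split: if_splits)
        moreover have "(G @ [S]) ! length G = S" by simp
        ultimately show ?thesis by blast
      qed
    qed
  qed
qed

lemma expand_step:
  assumes ok: "rowsok G m" and ex: "expand G a"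
    and Ssub: "S \<subseteq> {1..m}" and wS: "w \<in> S" and cS: "a + 1 \<le> card S"
    and undec: "mcm G (insert w ({1..m} - S)) \<noteq> mcm G ({1..m} - S) + 1"
  shows "expand (G @ [S]) a"
  unfolding expand_def
proof (intro allI impI)
  fix R' assume R': "R' \<subseteq> {..<length (G @ [S])}" "R' \<noteq> {}"
  define k where "k = length G"
  have R'': "R' \<subseteq> {..<Suc k}" using R' k_def by simp
  define R where "R = R' - {k}"
  have Rk: "R \<subseteq> {..<k}" using R'' R_def by auto
  show "card R' + a \<le> card (NB (G @ [S]) R')"
  proof (cases "k \<in> R'")
    case False
    then have "NB (G @ [S]) R' = NB G R" using NB_append[OF R''[unfolded k_def]] R_def k_def by simp
    moreover have "R = R'" using False R_def by auto
    ultimately show ?thesis using ex Rk R'(2) k_def unfolding expand_def by auto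
  next
    case True
    then have e: "NB (G @ [S]) R' = NB G R \<union> S" using NB_append[OF R''[unfolded k_def]] R_def k_def by simp
    have finR: "finite R" by (rule finite_subset[OF Rk]) simp
    have cR': "card R' = card R + 1" using True R_def finR
    proof -
      have "R' = insert k R" using True R_def by auto
      moreover have "k \<notin> R" using R_def by auto
      ultimately show ?thesis using finR by simp
    qed
    have finNR: "finite (NB G R)" using NB_fin ok Rk k_def by blast
    have finS: "finite S" by (rule finite_subset[OF Ssub]) simp
    show ?thesis
    proof (cases "R = {}")
      case True
      then have "NB G R = {}" unfolding NB_def by simp
      then show ?thesis using e cR' cS True by simp
    next
      case Rne: False
      have h: "card R + a \<le> card (NB G R)" using ex Rk Rne k_def unfolding expand_def by blast
      show ?thesis
      proof (rule ccontr)
        assume "\<not> ?thesis"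
        then have lt: "card (NB G R \<union> S) < card R + 1 + a" using e cR' by simp
        have "card (NB G R) \<le> card (NB G R \<union> S)" using finNR finS by (simp add: card_mono)
        then have eq: "card (NB G R \<union> S) = card (NB G R)" and cNR: "card (NB G R) = card R + a"
          using lt h by linarith+
        have "NB G R = NB G R \<union> S" using eq finNR finS
          by (intro card_subset_eq) auto
        then have "S \<subseteq> NB G R" by blast
        then have "mcm G (insert w ({1..m} - S)) = mcm G ({1..m} - S) + 1"
          using decodable[OF ok ex _ Rne cNR _ wS cS] Rk k_def by blast
        then show False using undec by blast
      qed
    qed
  qed
qed

lemma main_inv:
  assumes "umcd_exec m A N G k"
    and "index_coding_instance m A"
    and "rowsok G m" and "expand G (A_min m A)"
    and "N \<subseteq> {1..m}"
    and "\<forall>j\<in>N. mcm G (insert j (interf m A j)) \<noteq> mcm G (interf m A j) + 1"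
  shows "k + A_min m A \<le> m"
  using assms
proof (induction rule: umcd_exec.induct)
  case (stop G)
  show ?case
  proof (cases "G = []")
    case True
    have m1: "1 \<in> {1..m}" using stop(1) unfolding index_coding_instance_def by simp
    have "A_min m A \<le> card (A 1)" unfolding A_min_def using m1 by (intro Min_le) auto
    also have "\<dots> \<le> card {1..m}" using stop(1) m1 unfolding index_coding_instance_def
      by (intro card_mono) auto
    finally show ?thesis using True by simp
  next
    case False
    then have ne: "{..<length G} \<noteq> {}" using lessThan_iff[of 0 "length G"] by auto
    then have "card {..<length G} + A_min m A \<le> card (NB G {..<length G})"
      using stop(3) unfolding expand_def by blast
    moreover have "card (NB G {..<length G}) \<le> card {1..m}"
      using NB_sub[OF stop(2), of "{..<length G}"] by (intro card_mono) auto
    ultimately show ?thesis by simp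
  qed
next
  case (step N w G' G N' k)
  note ic = step.prems(1) and ok = step.prems(2) and ex = step.prems(3)
    and Nsub = step.prems(4) and und = step.prems(5)
  define S where "S = insert w (A w)"
  have wm: "w \<in> {1..m}" using step.hyps(2) Nsub by (rule rev_subsetD)
  have Aw: "A w \<subseteq> {1..m} - {w}" using ic wm unfolding index_coding_instance_def by auto
  have Ssub: "S \<subseteq> {1..m}" using Aw wm S_def by auto
  have finA: "finite (A w)" by (rule finite_subset[OF Aw]) simp
  have "A_min m A \<le> card (A w)" unfolding A_min_def using wm by (intro Min_le) auto
  moreover have "w \<notin> A w" using Aw by blast
  ultimately have cS: "A_min m A + 1 \<le> card S" using S_def finA by simp
  have B: "interf m A w = {1..m} - S" unfolding interf_def S_def by auto
  have undec: "mcm G (insert w ({1..m} - S)) \<noteq> mcm G ({1..m} - S) + 1"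
    using bspec[OF und step.hyps(2)] unfolding B by simp
  have "expand G' (A_min m A)"
    using expand_step[OF ok ex Ssub _ cS undec] step.hyps(4) S_def by simp
  moreover have "rowsok G' m" using ok step.hyps(4) Ssub S_def unfolding rowsok_def
    by (auto simp: nth_append less_Suc_eq)
  moreover have "N' \<subseteq> {1..m}" using step.hyps(5) Nsub by auto
  moreover have "\<forall>j\<in>N'. mcm G' (insert j (interf m A j)) \<noteq> mcm G' (interf m A j) + 1"
    using step.hyps(5) by auto
  ultimately show ?case using step.IH[OF ic] by blast
qed

theorem theorem3:
  fixes m :: nat and A :: "nat \<Rightarrow> nat set" and k :: nat
  assumes "index_coding_instance m A"
    and "umcd_output m A k"
  shows "k \<le> m - A_min m A"
proof -
  have "umcd_exec m A {1..m} [] k" using assms(2) unfolding umcd_output_def .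
  moreover have "rowsok [] m" unfolding rowsok_def by simp
  moreover have "expand [] (A_min m A)" unfolding expand_def by simp
  moreover have "\<forall>j\<in>{1..m}. mcm [] (insert j (interf m A j)) \<noteq> mcm [] (interf m A j) + 1"
    by (simp add: mcm_nil)
  ultimately have "k + A_min m A \<le> m" using main_inv assms(1) by blast
  then show ?thesis by simp
qed

end
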